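(* Let $T$ be a complete theory and $\phi,\psi$ formulas with $T\vdash\phi\,\mathtt u\,\psi$. Then $T\vdash\psi$, or there exists $m\in\omega$ such that $T\vdash\bigwedge_{i=0}^m[1]^i(\phi\wedge\neg\psi)\wedge[1]^{m+1}\psi$.
   Context: Fix $Var=\{p_n : n\in\omega\}$. The formulas of $L([1],[\omega],\mathtt u,\mathtt U)$ form the smallest set containing $Var$ and closed under $\neg\phi$, $[1]\phi$, $[\omega]\phi$, $(\phi\wedge\psi)$, $(\phi\,\mathtt u\,\psi)$, $(\phi\,\mathtt U\,\psi)$. Abbreviations: $\vee,\to,\leftrightarrow$ as usual; $\mathtt f\phi:=(\phi\to\phi)\,\mathtt u\,\phi$, $\mathtt g\phi:=\neg\mathtt f\neg\phi$; $[a]^0\phi:=\phi$, $[a]^{n+1}\phi:=[a][a]^n\phi$ for $a\in\{1,\omega\}$. A theory is a nonempty set of formulas. Proof system. Axioms: all instances of A1 substitution instances of classical tautologies; A2 $[1][\omega]\phi\leftrightarrow[\omega]\phi$; A3 $\neg[a]\phi\leftrightarrow[a]\neg\phi$ ($a\in\{1,\omega\}$); A4 $[a](\phi*\psi)\leftrightarrow([a]\phi*[a]\psi)$ ($a\in\{1,\omega\}$, $*\in\{\wedge,\vee,\to,\leftrightarrow\}$); A5 $\psi\to\phi\,\mathtt u\,\psi$; A6 $\phi\,\mathtt u\,\psi\to\phi\,\mathtt U\,\psi$; A7 $\big(\bigwedge_{k=0}^n[1]^k(\phi\wedge\neg\psi)\wedge[1]^{n+1}\psi\big)\to\phi\,\mathtt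 u\,\psi$ ($n\in\omega$); A8 $\big(\bigwedge_{k=0}^n[\omega]^k\mathtt g(\phi\wedge\neg\psi)\wedge[\omega]^{n+1}(\phi\,\mathtt u\,\psi)\big)\to\phi\,\mathtt U\,\psi$ ($n\in\omega$). Rules: R1 from $\phi$ and $\phi\to\psi$ infer $\psi$; R2 from $\phi$ infer $[a]\phi$, $a\in\{1,\omega\}$; R3 from $\theta\to\neg\psi$ and all $\theta\to\big(\bigvee_{k=0}^n[1]^k(\neg\phi\vee\psi)\vee[1]^{n+1}\neg\psi\big)$, $n\in\omega$, infer $\theta\to\neg(\phi\,\mathtt u\,\psi)$; R4 from $\theta\to\neg(\phi\,\mathtt u\,\psi)$ and all $\theta\to\big(\bigvee_{k=0}^n[\omega]^k\neg\mathtt g(\phi\wedge\neg\psi)\vee[\omega]^{n+1}\neg(\phi\,\mathtt u\,\psi)\big)$, $n\in\omega$, infer $\theta\to\neg(\phi\,\mathtt U\,\psi)$. $\vdash\phi$ ($\phi$ is a theorem) iff there is a sequence $(\phi_\beta)_{\beta\le\alpha}$, $\alpha$ a countable ordinal, with $\phi_\alpha=\phi$ and each $\phi_\beta$ an axiom or obtained from earlier members by a rule. $T\vdash\phi$ iff there is such a sequence in which each member is an axiom, a member of $T$, or obtained from earlier members by a rule, where R2 may only be applied to theorems. A theory $T$ is consistent iff there is no formula $\chi$ with $T\vdash\chi$ and $T\vdash\neg\chi$; $T$ is complete iff it is consistent and for every formula $\chi$, $T\vdash\chi$ or $T\vdash\neg\chi$. *)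

theory Defs
  imports Main
begin

datatype fm =
    Var nat
  | Neg fm
  | One fm
  | Om fm
  | Conj fm fm
  | Uu fm fm
  | UU fm fm

definition Or :: "fm \<Rightarrow> fm \<Rightarrow> fm" where
  "Or a b = Neg (Conj (Neg a) (Neg b))"
definition Imp :: "fm \<Rightarrow> fm \<Rightarrow> fm" where
  "Imp a b = Neg (Conj a (Neg b))"
definition Iff :: "fm \<Rightarrow> fm \<Rightarrow> fm" where
  "Iff a b = Conj (Imp a b) (Imp b a)"

definition Ff :: "fm \<Rightarrow> fm" where
  "Ff a = Uu (Imp a a) a"
definition Gg :: "fm \<Rightarrow> fm" where
  "Gg a = Neg (Ff (Neg a))"

datatype md = M1 | Mw

fun box :: "md \<Rightarrow> fm \<Rightarrow> fm" where
  "box M1 a = One a"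
| "box Mw a = Om a"

fun boxn :: "md \<Rightarrow> nat \<Rightarrow> fm \<Rightarrow> fm" where
  "boxn m 0 a = a"
| "boxn m (Suc n) a = box m (boxn m n a)"

fun bigconj :: "(nat \<Rightarrow> fm) \<Rightarrow> nat \<Rightarrow> fm" where
  "bigconj f 0 = f 0"
| "bigconj f (Suc n) = Conj (bigconj f n) (f (Suc n))"

fun bigdisj :: "(nat \<Rightarrow> fm) \<Rightarrow> nat \<Rightarrow> fm" where
  "bigdisj f 0 = f 0"
| "bigdisj f (Suc n) = Or (bigdisj f n) (f (Suc n))"

fun propositional :: "fm \<Rightarrow> bool" where
  "propositional (Var n) = True"
| "propositional (Neg a) = propositional a"
| "propositional (Conj a b) = (propositional a \<and> propositional b)"
| "propositional _ = False"

fun peval :: "(nat \<Rightarrow> bool) \<Rightarrow> fm \<Rightarrow> bool" where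
  "peval v (Var n) = v n"
| "peval v (Neg a) = (\<not> peval v a)"
| "peval v (Conj a b) = (peval v a \<and> peval v b)"
| "peval v _ = False"

fun subst :: "(nat \<Rightarrow> fm) \<Rightarrow> fm \<Rightarrow> fm" where
  "subst s (Var n) = s n"
| "subst s (Neg a) = Neg (subst s a)"
| "subst s (One a) = One (subst s a)"
| "subst s (Om a) = Om (subst s a)"
| "subst s (Conj a b) = Conj (subst s a) (subst s b)"
| "subst s (Uu a b) = Uu (subst s a) (subst s b)"
| "subst s (UU a b) = UU (subst s a) (subst s b)"

definition taut_instance :: "fm \<Rightarrow> bool" where
  "taut_instance \<chi> \<longleftrightarrow>
     (\<exists>t s. propositional t \<and> (\<forall>v. peval v t) \<and> \<chi> = subst s t)"

definition axiom :: "fm \<Rightarrow> bool" where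
  "axiom \<chi> \<longleftrightarrow>
     taut_instance \<chi>
   \<or> (\<exists>a. \<chi> = Iff (One (Om a)) (Om a))
   \<or> (\<exists>m a. \<chi> = Iff (Neg (box m a)) (box m (Neg a)))
   \<or> (\<exists>m a b. \<exists>op \<in> {Conj, Or, Imp, Iff}.
         \<chi> = Iff (box m (op a b)) (op (box m a) (box m b)))
   \<or> (\<exists>a b. \<chi> = Imp b (Uu a b))
   \<or> (\<exists>a b. \<chi> = Imp (Uu a b) (UU a b))
   \<or> (\<exists>a b n. \<chi> = Imp (Conj (bigconj (\<lambda>k. boxn M1 k (Conj a (Neg b))) n)
                              (boxn M1 (Suc n) b)) (Uu a b))
   \<or> (\<exists>a b n. \<chi> = Imp (Conj (bigconj (\<lambda>k. boxn Mw k (Gg (Conj a (Neg b)))) n)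
                              (boxn Mw (Suc n) (Uu a b))) (UU a b))"

text \<open>E: "is an earlier member of the sequence"; H: hypotheses (members of T);
  R2ok: the premises to which rule R2 may be applied.\<close>
definition justified ::
  "(fm \<Rightarrow> bool) \<Rightarrow> (fm \<Rightarrow> bool) \<Rightarrow> (fm \<Rightarrow> bool) \<Rightarrow> fm \<Rightarrow> bool" where
  "justified E H R2ok \<chi> \<longleftrightarrow>
     axiom \<chi>
   \<or> H \<chi>
   \<or> (\<exists>a. E a \<and> E (Imp a \<chi>))
   \<or> (\<exists>a m. E a \<and> R2ok a \<and> \<chi> = box m a)
   \<or> (\<exists>\<theta> a b. \<chi> = Imp \<theta> (Neg (Uu a b)) \<and> E (Imp \<theta> (Neg b)) \<and>
        (\<forall>n. E (Imp \<theta> (Or (bigdisj (\<lambda>k. boxn M1 k (Or (Neg a) b)) n)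
                              (boxn M1 (Suc n) (Neg b))))))
   \<or> (\<exists>\<theta> a b. \<chi> = Imp \<theta> (Neg (UU a b)) \<and> E (Imp \<theta> (Neg (Uu a b))) \<and>
        (\<forall>n. E (Imp \<theta> (Or (bigdisj (\<lambda>k. boxn Mw k (Neg (Gg (Conj a (Neg b))))) n)
                              (boxn Mw (Suc n) (Neg (Uu a b)))))))"

text \<open>A sequence indexed by a countable ordinal alpha+1 is represented by a
  well-order r on a set of natural numbers (the countable index set, order type
  alpha+1) together with a labelling f; last_ix is the last index.\<close>
definition valid_seq ::
  "(fm \<Rightarrow> bool) \<Rightarrow> (fm \<Rightarrow> bool) \<Rightarrow> nat rel \<Rightarrow> (nat \<Rightarrow> fm) \<Rightarrow> nat \<Rightarrow> bool" where
  "valid_seq H R2ok r f last_ix \<longleftrightarrow>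
     Well_order r \<and> last_ix \<in> Field r \<and> (\<forall>i\<in>Field r. (i, last_ix) \<in> r) \<and>
     (\<forall>i\<in>Field r. justified (\<lambda>a. \<exists>j. (j, i) \<in> r \<and> j \<noteq> i \<and> f j = a) H R2ok (f i))"

definition is_theorem :: "fm \<Rightarrow> bool" where
  "is_theorem \<phi> \<longleftrightarrow>
     (\<exists>r f last_ix. valid_seq (\<lambda>_. False) (\<lambda>_. True) r f last_ix \<and> f last_ix = \<phi>)"

definition derives :: "fm set \<Rightarrow> fm \<Rightarrow> bool" where
  "derives T \<phi> \<longleftrightarrow>
     (\<exists>r f last_ix. valid_seq (\<lambda>a. a \<in> T) is_theorem r f last_ix \<and> f last_ix = \<phi>)"

definition is_theory :: "fm set \<Rightarrow> bool" where
  "is_theory T \<longleftrightarrow> T \<noteq> {}"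

definition consistent :: "fm set \<Rightarrow> bool" where
  "consistent T \<longleftrightarrow> \<not> (\<exists>\<chi>. derives T \<chi> \<and> derives T (Neg \<chi>))"

definition complete :: "fm set \<Rightarrow> bool" where
  "complete T \<longleftrightarrow> consistent T \<and> (\<forall>\<chi>. derives T \<chi> \<or> derives T (Neg \<chi>))"

end

theory Submission
  imports Defs "HOL-Library.Countable" "HOL-Library.Countable_Set"
begin
definition PF :: "(fm \<Rightarrow> bool) \<Rightarrow> (fm \<Rightarrow> bool) \<Rightarrow> fm \<Rightarrow> bool" where
  "PF H R a \<longleftrightarrow> (\<exists>r f l. valid_seq H R r f l \<and> f l = a)"

lemma justified_mono:
  assumes "justified E H R \<chi>" "\<And>a. E a \<Longrightarrow> E' a" "\<And>a. H a \<Longrightarrow> H' a"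
    "\<And>a. E a \<Longrightarrow> R a \<Longrightarrow> R' a"
  shows "justified E' H' R' \<chi>"
  using assms unfolding justified_def by metis

lemma PF_single:
  assumes "justified (\<lambda>_. False) H R \<chi>"
  shows "PF H R \<chi>"
proof -
  have "Well_order {(0::nat,0)}"
    by (simp add: well_order_on_def)
  then have "valid_seq H R {(0,0)} (\<lambda>_. \<chi>) 0"
    unfolding valid_seq_def using justified_mono[OF assms] by (auto simp: Field_def)
  then show ?thesis unfolding PF_def by blast
qed

fun enc :: "(nat \<times> nat) option \<Rightarrow> nat" where
  "enc None = 0" | "enc (Some p) = Suc (prod_encode p)"
fun dec :: "nat \<Rightarrow> (nat \<times> nat) option" where
  "dec 0 = None" | "dec (Suc k) = Some (prod_decode k)"
lemma dec_enc[simp]: "dec (enc x) = x" by (cases x) auto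
lemma inj_enc: "inj enc" by (metis dec_enc injI)

lemma dir_image_mem: "inj f \<Longrightarrow> ((f a, f b) \<in> dir_image r f) = ((a,b)\<in>r)"
  unfolding dir_image_def by (auto dest: injD)

lemma wo_facts:
  assumes "Well_order r"
  shows "\<And>x. x \<in> Field r \<Longrightarrow> (x,x) \<in> r"
    and "\<And>x y z. (x,y) \<in> r \<Longrightarrow> (y,z) \<in> r \<Longrightarrow> (x,z) \<in> r"
    and "\<And>x y. (x,y) \<in> r \<Longrightarrow> (y,x) \<in> r \<Longrightarrow> x = y"
    and "\<And>x y. x \<in> Field r \<Longrightarrow> y \<in> Field r \<Longrightarrow> x \<noteq> y \<Longrightarrow> (x,y) \<in> r \<or> (y,x) \<in> r"
  using assms unfolding well_order_on_def linear_order_on_def partial_order_on_def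
    preorder_on_def refl_on_def trans_def antisym_def total_on_def by blast+

lemma wo_min:
  assumes "Well_order r" "A \<subseteq> Field r" "A \<noteq> {}"
  shows "\<exists>a\<in>A. \<forall>a'\<in>A. (a,a') \<in> r"
  using assms Linear_order_Well_order_iff well_order_on_def by blast

definition sumQ :: "(nat \<Rightarrow> nat rel) \<Rightarrow> (nat \<times> nat) option rel" where
  "sumQ r = {(Some (n,i), Some (m,j)) | n i m j. i \<in> Field (r n) \<and> j \<in> Field (r m) \<and>
       (n < m \<or> (n = m \<and> (i,j) \<in> r n))}
    \<union> {(x, None) | x. x = None \<or> (\<exists>n i. x = Some (n,i) \<and> i \<in> Field (r n))}"

lemma sumQ_SS[simp]: "((Some (n,i), Some (m,j)) \<in> sumQ r) =
   (i \<in> Field (r n) \<and> j \<in> Field (r m) \<and> (n < m \<or> (n = m \<and> (i,j) \<in> r n)))"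
  unfolding sumQ_def by blast
lemma sumQ_xN[simp]: "((x, None) \<in> sumQ r) = (x = None \<or> (\<exists>n i. x = Some (n,i) \<and> i \<in> Field (r n)))"
  unfolding sumQ_def by blast
lemma sumQ_NS[simp]: "(None, Some p) \<notin> sumQ r"
  unfolding sumQ_def by blast

lemma sumQ_Field: "Field (sumQ r) = insert None {Some (n,i) | n i. i \<in> Field (r n)}"
proof
  show "Field (sumQ r) \<subseteq> insert None {Some (n,i) | n i. i \<in> Field (r n)}"
    unfolding sumQ_def Field_def by auto
  show "insert None {Some (n,i) | n i. i \<in> Field (r n)} \<subseteq> Field (sumQ r)"
  proof
    fix x assume "x \<in> insert None {Some (n,i) | n i. i \<in> Field (r n)}"
    then have "(x,None) \<in> sumQ r" by auto
    then show "x \<in> Field (sumQ r)" by (rule FieldI1)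
  qed
qed

lemma sumQ_cases:
  obtains (N) "x = None" | (S) n i where "x = Some (n,i)"
  by (metis not_None_eq surj_pair)

lemma sumQ_wo:
  assumes wo: "\<And>n. Well_order (r n)"
  shows "Well_order (sumQ r)"
proof -
  note F = sumQ_Field[of r]
  have toN: "\<And>x. x \<in> Field (sumQ r) \<Longrightarrow> (x, None) \<in> sumQ r" unfolding F by auto
  have lin: "Linear_order (sumQ r)"
    unfolding linear_order_on_def partial_order_on_def preorder_on_def
  proof (intro conjI)
    show "refl_on (Field (sumQ r)) (sumQ r)"
      unfolding refl_on_def
    proof
      fix x assume x: "x \<in> Field (sumQ r)"
      show "(x,x) \<in> sumQ r"
        by (cases x rule: sumQ_cases) (use x F wo_facts(1)[OF wo] in auto)
    qed
    show "sumQ r \<subseteq> Field (sumQ r) \<times> Field (sumQ r)" by (auto intro: FieldI1 FieldI2)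
    show "trans (sumQ r)"
      unfolding trans_def
    proof (intro allI impI)
      fix x y z assume xy: "(x,y) \<in> sumQ r" and yz: "(y,z) \<in> sumQ r"
      show "(x,z) \<in> sumQ r"
      proof (cases z rule: sumQ_cases)
        case N then show ?thesis using xy toN by (auto intro: FieldI1)
      next
        case (S m k)
        then obtain n' j where y: "y = Some (n',j)" using yz by (cases y rule: sumQ_cases) auto
        then obtain n i where x: "x = Some (n,i)" using xy by (cases x rule: sumQ_cases) auto
        show ?thesis using xy yz x y S wo_facts(2)[OF wo] by auto
      qed
    qed
    show "antisym (sumQ r)"
      unfolding antisym_def
    proof (intro allI impI)
      fix x y assume xy: "(x,y) \<in> sumQ r" and yx: "(y,x) \<in> sumQ r"
      show "x = y"
      proof (cases x rule: sumQ_cases)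
        case N then show ?thesis using xy yx by (cases y rule: sumQ_cases) auto
      next
        case (S n i)
        then obtain m j where y: "y = Some (m,j)" using yx by (cases y rule: sumQ_cases) auto
        show ?thesis using xy yx y S wo_facts(3)[OF wo] by auto
      qed
    qed
    show "total_on (Field (sumQ r)) (sumQ r)"
      unfolding total_on_def
    proof (intro ballI impI)
      fix x y assume x: "x \<in> Field (sumQ r)" and y: "y \<in> Field (sumQ r)" and xy: "x \<noteq> y"
      show "(x, y) \<in> sumQ r \<or> (y, x) \<in> sumQ r"
      proof (cases x rule: sumQ_cases)
        case N then show ?thesis using toN[OF y] by simp
      next
        case (S n i)
        show ?thesis
        proof (cases y rule: sumQ_cases)
          case N then show ?thesis using toN[OF x] by simp
        next
          case yS: (S m j)
          have iF: "i \<in> Field (r n)" using x S unfolding F by auto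
          have jF: "j \<in> Field (r m)" using y yS unfolding F by auto
          consider "n < m" | "m < n" | "n = m" by linarith
          then show ?thesis
          proof cases
            case 1 then show ?thesis using iF jF S yS by simp
          next
            case 2 then show ?thesis using iF jF S yS by simp
          next
            case 3
            then have "i \<noteq> j" using xy S yS by simp
            then have "(i,j) \<in> r n \<or> (j,i) \<in> r n" using wo_facts(4)[OF wo] iF jF 3 by blast
            then show ?thesis using iF jF S yS 3 by auto
          qed
        qed
      qed
    qed
  qed
  show ?thesis
    unfolding Linear_order_Well_order_iff[OF lin]
  proof (intro allI impI)
    fix A assume A1: "A \<subseteq> Field (sumQ r)" and A2: "A \<noteq> {}"
    have A: "A \<subseteq> Field (sumQ r) \<and> A \<noteq> {}" using A1 A2 by blast
    show "\<exists>a\<in>A. \<forall>a'\<in>A. (a, a') \<in> sumQ r"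
    proof (cases "\<exists>n i. Some (n,i) \<in> A")
      case False
      have allN: "\<forall>x\<in>A. x = None"
      proof
        fix x assume "x \<in> A" then show "x = None" using False by (cases x rule: sumQ_cases) auto
      qed
      obtain a where "a \<in> A" using A by blast
      then have NA: "None \<in> A" using allN by metis
      show ?thesis
      proof (rule bexI[OF _ NA], rule ballI)
        fix a' assume "a' \<in> A" then have "a' = None" using allN by blast then show "(None, a') \<in> sumQ r" by simp
      qed
    next
      case True
      define n0 where "n0 = (LEAST n. \<exists>i. Some (n,i) \<in> A)"
      have n0: "\<exists>i. Some (n0,i) \<in> A" unfolding n0_def using True by (rule LeastI_ex)
      have n0le: "\<And>m j. Some (m,j) \<in> A \<Longrightarrow> n0 \<le> m" unfolding n0_def using Least_le[of "\<lambda>n. \<exists>i. Some (n,i) \<in> A"] by blast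
      define B where "B = {i. Some (n0,i) \<in> A}"
      have AF: "j \<in> Field (r m)" if "Some (m,j) \<in> A" for m j
      proof -
        have "Some (m,j) \<in> insert None {Some (n,i) | n i. i \<in> Field (r n)}" using A F that by blast
        then show ?thesis by auto
      qed
      have BF: "B \<subseteq> Field (r n0)" using AF unfolding B_def by auto
      have "B \<noteq> {}" using n0 B_def by auto
      then obtain i0 where i0: "i0 \<in> B" "\<forall>j\<in>B. (i0,j) \<in> r n0"
        using wo_min[OF wo BF] by blast
      have i0F: "i0 \<in> Field (r n0)" using i0 BF by auto
      show ?thesis
      proof (rule bexI[of _ "Some (n0,i0)"])
        show "Some (n0,i0) \<in> A" using i0 B_def by auto
        show "\<forall>a'\<in>A. (Some (n0, i0), a') \<in> sumQ r"
        proof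
          fix a' assume a': "a' \<in> A"
          show "(Some (n0, i0), a') \<in> sumQ r"
          proof (cases a' rule: sumQ_cases)
            case N then show ?thesis using i0F by simp
          next
            case (S m j)
            then have "n0 \<le> m" "j \<in> Field (r m)" using n0le AF a' by auto
            moreover have "m = n0 \<Longrightarrow> (i0, j) \<in> r n0" using i0 S a' B_def by auto
            ultimately show ?thesis using S i0F by auto
          qed
        qed
      qed
    qed
  qed
qed

lemma PF_combine:
  fixes g :: "nat \<Rightarrow> fm"
  assumes prem: "\<And>n. PF H R (g n)"
    and just: "justified (\<lambda>a. \<exists>n. g n = a) H R \<chi>"
  shows "PF H R \<chi>"
proof -
  from prem obtain r f l where rfl: "\<And>n. valid_seq H R (r n) (f n) (l n) \<and> f n (l n) = g n"
    unfolding PF_def by metis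
  have wo: "\<And>n. Well_order (r n)" using rfl unfolding valid_seq_def by blast
  define Q where "Q = sumQ r"
  define R' where "R' = dir_image Q enc"
  define f' where "f' = (\<lambda>k. case dec k of None \<Rightarrow> \<chi> | Some (n,i) \<Rightarrow> f n i)"
  have f'S: "\<And>n i. f' (enc (Some (n,i))) = f n i" by (simp add: f'_def)
  have f'N: "f' 0 = \<chi>" by (simp add: f'_def)
  have mem: "\<And>a b. ((enc a, enc b) \<in> R') = ((a,b) \<in> Q)"
    unfolding R'_def using dir_image_mem[OF inj_enc] by blast
  have FR: "Field R' = enc ` Field Q" unfolding R'_def by (rule dir_image_Field)
  have FQ: "Field Q = insert None {Some (n,i) | n i. i \<in> Field (r n)}"
    unfolding Q_def by (rule sumQ_Field)
  have WO: "Well_order R'" unfolding R'_def Q_def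
    by (rule Well_order_dir_image[OF sumQ_wo[OF wo]]) (meson inj_enc inj_on_subset subset_UNIV)
  have vs: "valid_seq H R R' f' 0"
    unfolding valid_seq_def
  proof (intro conjI ballI)
    show "Well_order R'" by fact
    show "0 \<in> Field R'" unfolding FR FQ by (metis enc.simps(1) image_insert insertI1)
    fix k assume k: "k \<in> Field R'"
    then obtain x where x: "x \<in> Field Q" "k = enc x" unfolding FR by blast
    have xN: "(x, None) \<in> Q" using x FQ unfolding Q_def sumQ_def by auto
    show "(k, 0) \<in> R'" using mem[of x None] xN x by simp
    show "justified (\<lambda>a. \<exists>j. (j, k) \<in> R' \<and> j \<noteq> k \<and> f' j = a) H R (f' k)"
    proof (cases x)
      case None
      show ?thesis unfolding x(2) None enc.simps f'N
      proof (rule justified_mono[OF just])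
        fix a assume "\<exists>n. g n = a"
        then obtain n where gn: "g n = a" by blast
        have lF: "l n \<in> Field (r n)" using rfl unfolding valid_seq_def by blast
        have "(Some (n, l n), None) \<in> Q" using lF unfolding Q_def sumQ_def by auto
        then show "\<exists>j. (j, 0) \<in> R' \<and> j \<noteq> 0 \<and> f' j = a"
          using mem[of "Some (n, l n)" None] f'S rfl gn by (intro exI[of _ "enc (Some (n, l n))"]) auto
      qed simp_all
    next
      case (Some p)
      then obtain n i where p: "x = Some (n,i)" by (cases p) auto
      have iF: "i \<in> Field (r n)" using x(1) FQ p by auto
      have jn: "justified (\<lambda>a. \<exists>j. (j, i) \<in> r n \<and> j \<noteq> i \<and> f n j = a) H R (f n i)"
        using rfl iF unfolding valid_seq_def by blast
      show ?thesis unfolding x(2) p f'S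
      proof (rule justified_mono[OF jn], simp_all)
        fix a assume "\<exists>j. (j, i) \<in> r n \<and> j \<noteq> i \<and> f n j = a"
        then obtain j where j: "(j, i) \<in> r n" "j \<noteq> i" "f n j = a" by blast
        have "j \<in> Field (r n)" using j(1) by (auto intro: FieldI1)
        then have "(Some (n,j), Some (n,i)) \<in> Q" using iF j unfolding Q_def sumQ_def by auto
        then show "\<exists>ja. (ja, Suc (prod_encode (n, i))) \<in> R' \<and> ja \<noteq> Suc (prod_encode (n, i)) \<and> f' ja = a"
          using mem[of "Some (n,j)" "Some (n,i)"] f'S j
          by (intro exI[of _ "enc (Some (n, j))"]) (auto simp: prod_encode_eq)
      qed
    qed
  qed
  then show ?thesis unfolding PF_def using f'N by blast
qed

lemma PF_closed:
  assumes "\<And>a. E a \<Longrightarrow> PF H R a" "countable {a. E a}" "justified E H R \<chi>"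
  shows "PF H R \<chi>"
proof (cases "{a. E a} = {}")
  case True
  then show ?thesis using PF_single justified_mono[OF assms(3)] by auto
next
  case False
  define g :: "nat \<Rightarrow> fm" where "g = from_nat_into {a. E a}"
  have rg: "range g = {a. E a}" unfolding g_def using range_from_nat_into[OF False assms(2)] .
  show ?thesis
  proof (rule PF_combine)
    show "PF H R (g n)" for n using rg assms(1) by auto
    show "justified (\<lambda>a. \<exists>n. g n = a) H R \<chi>"
      by (rule justified_mono[OF assms(3)]) (metis mem_Collect_eq rangeE rg)
  qed
qed

lemma thm_PF: "is_theorem = PF (\<lambda>_. False) (\<lambda>_. True)"
  unfolding is_theorem_def PF_def by (rule ext) blast
lemma der_PF: "derives T = PF (\<lambda>a. a \<in> T) is_theorem"
  unfolding derives_def PF_def by (rule ext) blast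

lemma countable_two: "countable {x. x = a \<or> x = b}"
proof -
  have "{x. x = a \<or> x = b} = {a, b}" by auto
  then show ?thesis by simp
qed

lemma just_ax: "axiom a \<Longrightarrow> justified E H R a"
  unfolding justified_def by (rule disjI1)
lemma just_mp: "E a \<Longrightarrow> E (Imp a b) \<Longrightarrow> justified E H R b"
  unfolding justified_def by (rule disjI2, rule disjI2, rule disjI1) blast
lemma just_box: "E a \<Longrightarrow> R a \<Longrightarrow> justified E H R (box m a)"
  unfolding justified_def by (rule disjI2, rule disjI2, rule disjI2, rule disjI1) blast

lemma thm_ax: "axiom a \<Longrightarrow> is_theorem a"
  unfolding thm_PF by (rule PF_single) (rule just_ax)

lemma thm_mp: "is_theorem a \<Longrightarrow> is_theorem (Imp a b) \<Longrightarrow> is_theorem b"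
  unfolding thm_PF
proof (rule PF_closed[of "\<lambda>x. x = a \<or> x = Imp a b"])
  show "countable {x. x = a \<or> x = Imp a b}" by (rule countable_two)
  show "justified (\<lambda>x. x = a \<or> x = Imp a b) (\<lambda>_. False) (\<lambda>_. True) b" by (rule just_mp[of _ a]) simp_all
qed blast

lemma thm_box: "is_theorem a \<Longrightarrow> is_theorem (box m a)"
  unfolding thm_PF
proof (rule PF_closed[of "\<lambda>x. x = a"])
  show "countable {x. x = a}" by simp
  show "justified (\<lambda>x. x = a) (\<lambda>_. False) (\<lambda>_. True) (box m a)" by (rule just_box) simp_all
qed blast

lemma der_mp: "derives T a \<Longrightarrow> derives T (Imp a b) \<Longrightarrow> derives T b"
  unfolding der_PF
proof (rule PF_closed[of "\<lambda>x. x = a \<or> x = Imp a b"])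
  show "countable {x. x = a \<or> x = Imp a b}" by (rule countable_two)
  show "justified (\<lambda>x. x = a \<or> x = Imp a b) (\<lambda>a. a \<in> T) is_theorem b" by (rule just_mp[of _ a]) simp_all
qed blast

lemma transfer_seq:
  assumes vs: "valid_seq (\<lambda>_. False) (\<lambda>_. True) r f l"
  shows "i \<in> Field r \<longrightarrow> is_theorem (f i) \<and> derives T (f i)"
proof -
  have WO: "Well_order r" using vs by (simp add: valid_seq_def)
  have JJ: "\<forall>i\<in>Field r. justified (\<lambda>a. \<exists>j. (j, i) \<in> r \<and> j \<noteq> i \<and> f j = a) (\<lambda>_. False) (\<lambda>_. True) (f i)"
    using vs by (simp add: valid_seq_def)
  have wf: "wf (r - Id)" using WO unfolding well_order_on_def by (rule conjunct2)
  show ?thesis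
  proof (rule wf_induct[OF wf, of "\<lambda>i. i \<in> Field r \<longrightarrow> is_theorem (f i) \<and> derives T (f i)"], rule impI)
    fix i
    assume IH0: "\<forall>y. (y, i) \<in> r - Id \<longrightarrow> y \<in> Field r \<longrightarrow> is_theorem (f y) \<and> derives T (f y)"
      and iF: "i \<in> Field r"
    define E where "E = (\<lambda>a. \<exists>j. (j, i) \<in> r \<and> j \<noteq> i \<and> f j = a)"
    have IH: "is_theorem a \<and> derives T a" if e: "E a" for a
    proof -
      obtain j where j: "(j, i) \<in> r" "j \<noteq> i" "f j = a" using e unfolding E_def by blast
      have "j \<in> Field r" using j(1) by (rule FieldI1)
      then show ?thesis using IH0 j by blast
    qed
    have cnt: "countable {a. E a}"
    proof -
      have "{a. E a} \<subseteq> range f" unfolding E_def by auto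
      then show ?thesis by (rule countable_subset) simp
    qed
    have j: "justified E (\<lambda>_. False) (\<lambda>_. True) (f i)"
      using bspec[OF JJ iF] unfolding E_def .
    have P1: "PF (\<lambda>_. False) (\<lambda>_. True) a" if "E a" for a
    proof -
      have "is_theorem a" using IH[OF that] by blast
      then show ?thesis by (simp add: thm_PF)
    qed
    have "PF (\<lambda>_. False) (\<lambda>_. True) (f i)" by (rule PF_closed[OF P1 cnt j])
    then have t: "is_theorem (f i)" unfolding thm_PF .
    have j2: "justified E (\<lambda>a. a \<in> T) is_theorem (f i)"
    proof (rule justified_mono[OF j])
      show "\<And>a. E a \<Longrightarrow> E a" .
      show "\<And>a. False \<Longrightarrow> a \<in> T" by blast
      show "\<And>a. E a \<Longrightarrow> True \<Longrightarrow> is_theorem a" using IH by blast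
    qed
    have P2: "PF (\<lambda>a. a \<in> T) is_theorem a" if "E a" for a
    proof -
      have "derives T a" using IH[OF that] by blast
      then show ?thesis by (simp add: der_PF)
    qed
    have "PF (\<lambda>a. a \<in> T) is_theorem (f i)" by (rule PF_closed[OF P2 cnt j2])
    then have d: "derives T (f i)" unfolding der_PF .
    show "is_theorem (f i) \<and> derives T (f i)" using t d by blast
  qed
qed

lemma transfer: "is_theorem a \<Longrightarrow> derives T a"
proof -
  assume "is_theorem a"
  then obtain r f l where v: "valid_seq (\<lambda>_. False) (\<lambda>_. True) r f l" and fl: "f l = a"
    unfolding is_theorem_def by blast
  have "l \<in> Field r" using v unfolding valid_seq_def by blast
  then show ?thesis using transfer_seq[OF v, of l T] fl by blast
qed

instance fm :: countable by countable_datatype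

fun tv :: "(fm \<Rightarrow> bool) \<Rightarrow> fm \<Rightarrow> bool" where
  "tv w (Neg a) = (\<not> tv w a)"
| "tv w (Conj a b) = (tv w a \<and> tv w b)"
| "tv w x = w x"

fun skel :: "fm \<Rightarrow> fm" where
  "skel (Neg a) = Neg (skel a)"
| "skel (Conj a b) = Conj (skel a) (skel b)"
| "skel x = Var (to_nat x)"

lemma skel_prop: "propositional (skel x)" by (induction x) auto
lemma skel_subst: "subst from_nat (skel x) = x" by (induction x) auto
lemma skel_eval: "peval v (skel x) = tv (v \<circ> to_nat) x" by (induction x) auto

lemma taut: "(\<And>w. tv w x) \<Longrightarrow> is_theorem x"
proof -
  assume h: "\<And>w. tv w x"
  have "propositional (skel x) \<and> (\<forall>v. peval v (skel x)) \<and> x = subst from_nat (skel x)"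
    using skel_prop skel_subst skel_eval h by simp
  then have "taut_instance x" unfolding taut_instance_def by blast
  then have "axiom x" unfolding axiom_def by (rule disjI1)
  then show ?thesis by (rule thm_ax)
qed

lemma tv_Or[simp]: "tv w (Or a b) = (tv w a \<or> tv w b)" by (simp add: Or_def)
lemma tv_Imp[simp]: "tv w (Imp a b) = (tv w a \<longrightarrow> tv w b)" by (simp add: Imp_def)
lemma tv_Iff[simp]: "tv w (Iff a b) = (tv w a \<longleftrightarrow> tv w b)" by (auto simp add: Iff_def)

lemma mp1: "is_theorem a \<Longrightarrow> (\<And>w. tv w a \<Longrightarrow> tv w c) \<Longrightarrow> is_theorem c"
proof -
  assume a: "is_theorem a" and h: "\<And>w. tv w a \<Longrightarrow> tv w c"
  have "is_theorem (Imp a c)" by (rule taut) (simp add: h)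
  then show ?thesis using a thm_mp by blast
qed
lemma mp2: "is_theorem a \<Longrightarrow> is_theorem b \<Longrightarrow> (\<And>w. tv w a \<Longrightarrow> tv w b \<Longrightarrow> tv w c) \<Longrightarrow> is_theorem c"
proof -
  assume a: "is_theorem a" and b: "is_theorem b" and h: "\<And>w. tv w a \<Longrightarrow> tv w b \<Longrightarrow> tv w c"
  have "is_theorem (Imp a (Imp b c))" by (rule taut) (simp add: h)
  then have "is_theorem (Imp b c)" using a thm_mp by blast
  then show ?thesis using b thm_mp by blast
qed
lemma mp3: "is_theorem a \<Longrightarrow> is_theorem b \<Longrightarrow> is_theorem d \<Longrightarrow>
   (\<And>w. tv w a \<Longrightarrow> tv w b \<Longrightarrow> tv w d \<Longrightarrow> tv w c) \<Longrightarrow> is_theorem c"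
proof -
  assume a: "is_theorem a" "is_theorem b" "is_theorem d" "\<And>w. tv w a \<Longrightarrow> tv w b \<Longrightarrow> tv w d \<Longrightarrow> tv w c"
  have "is_theorem (Imp d c)" using mp2[OF a(1,2), of "Imp d c"] a(4) by auto
  then show ?thesis using a(3) thm_mp by blast
qed

lemma ax_A3: "axiom (Iff (Neg (box m a)) (box m (Neg a)))"
  unfolding axiom_def
  apply (rule disjI2, rule disjI2, rule disjI1)
  by (intro exI) (rule refl)
lemma ax_A4: "axiom (Iff (box m (Iff a b)) (Iff (box m a) (box m b)))"
  unfolding axiom_def
  apply (rule disjI2, rule disjI2, rule disjI2, rule disjI1)
  apply (rule exI[of _ m], rule exI[of _ a], rule exI[of _ b])
  by (rule bexI[of _ Iff]) simp_all

lemma boxn_iff: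
  assumes "is_theorem (Iff X (Neg Y))"
  shows "is_theorem (Iff (boxn M1 k X) (Neg (boxn M1 k Y)))"
proof (induction k)
  case 0 then show ?case using assms by simp
next
  case (Suc k)
  let ?X = "boxn M1 k X" and ?Y = "boxn M1 k Y"
  have a: "is_theorem (box M1 (Iff ?X (Neg ?Y)))" using Suc thm_box by blast
  have b: "is_theorem (Iff (box M1 (Iff ?X (Neg ?Y))) (Iff (box M1 ?X) (box M1 (Neg ?Y))))"
    by (rule thm_ax[OF ax_A4])
  have c: "is_theorem (Iff (Neg (box M1 ?Y)) (box M1 (Neg ?Y)))" by (rule thm_ax[OF ax_A3])
  have "is_theorem (Iff (box M1 ?X) (Neg (box M1 ?Y)))"
    by (rule mp3[OF a b c]) auto
  then show ?case by simp
qed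

lemma big_iff:
  assumes "\<And>k. is_theorem (Iff (B k) (Neg (A k)))"
  shows "is_theorem (Iff (bigdisj B n) (Neg (bigconj A n)))"
proof (induction n)
  case 0 then show ?case using assms by simp
next
  case (Suc n)
  show ?case using mp2[OF Suc assms[of "Suc n"]] by auto
qed

lemma key_thm:
  "is_theorem (Imp (Neg (Conj (bigconj (\<lambda>i. boxn M1 i (Conj \<phi> (Neg \<psi>))) n) (boxn M1 (Suc n) \<psi>)))
      (Or (bigdisj (\<lambda>k. boxn M1 k (Or (Neg \<phi>) \<psi>)) n) (boxn M1 (Suc n) (Neg \<psi>))))"
proof -
  have b0: "is_theorem (Iff (Or (Neg \<phi>) \<psi>) (Neg (Conj \<phi> (Neg \<psi>))))" by (rule taut) auto
  have b1: "is_theorem (Iff (Neg \<psi>) (Neg \<psi>))" by (rule taut) auto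
  have 1: "is_theorem (Iff (bigdisj (\<lambda>k. boxn M1 k (Or (Neg \<phi>) \<psi>)) n)
                 (Neg (bigconj (\<lambda>i. boxn M1 i (Conj \<phi> (Neg \<psi>))) n)))"
    by (rule big_iff) (rule boxn_iff[OF b0])
  have 2: "is_theorem (Iff (boxn M1 (Suc n) (Neg \<psi>)) (Neg (boxn M1 (Suc n) \<psi>)))"
    by (rule boxn_iff[OF b1])
  show ?thesis by (rule mp2[OF 1 2]) auto
qed


lemma der_ax: "axiom a \<Longrightarrow> derives T a" using transfer thm_ax by blast
lemma der_taut: "(\<And>w. tv w x) \<Longrightarrow> derives T x" using transfer taut by blast

lemma der_weaken: "derives T X \<Longrightarrow> derives T (Imp \<theta> X)"
  by (rule der_mp[of T X]) (auto intro: der_taut)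

theorem mainTheorem7:
  fixes T :: "fm set" and \<phi> \<psi> :: fm
  assumes "is_theory T" and "complete T" and "derives T (Uu \<phi> \<psi>)"
  shows "derives T \<psi> \<or>
         (\<exists>m. derives T (Conj (bigconj (\<lambda>i. boxn M1 i (Conj \<phi> (Neg \<psi>))) m)
                               (boxn M1 (Suc m) \<psi>)))"
proof (rule ccontr)
  assume neg: "\<not> ?thesis"
  have cons: "consistent T" and cpl: "\<And>\<chi>. derives T \<chi> \<or> derives T (Neg \<chi>)"
    using assms(2) unfolding complete_def by auto
  define \<theta> where "\<theta> = Imp (Var 0) (Var 0)"
  define dj where "dj = (\<lambda>n. Or (bigdisj (\<lambda>k. boxn M1 k (Or (Neg \<phi>) \<psi>)) n) (boxn M1 (Suc n) (Neg \<psi>)))"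
  have np: "derives T (Neg \<psi>)" using neg cpl by blast
  have nc: "derives T (Neg (Conj (bigconj (\<lambda>i. boxn M1 i (Conj \<phi> (Neg \<psi>))) n) (boxn M1 (Suc n) \<psi>)))" for n
    using neg cpl by blast
  have d: "derives T (Imp \<theta> (dj n))" for n
    unfolding dj_def by (rule der_weaken, rule der_mp[OF nc transfer[OF key_thm]])
  have e: "derives T (Imp \<theta> (Neg \<psi>))" by (rule der_weaken[OF np])
  define E where "E = (\<lambda>a. a = Imp \<theta> (Neg \<psi>) \<or> (\<exists>n. a = Imp \<theta> (dj n)))"
  have cnt: "countable {a. E a}"
  proof -
    have "{a. E a} = insert (Imp \<theta> (Neg \<psi>)) (range (\<lambda>n. Imp \<theta> (dj n)))" unfolding E_def by auto
    then show ?thesis by simp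
  qed
  have j: "justified E (\<lambda>a. a \<in> T) is_theorem (Imp \<theta> (Neg (Uu \<phi> \<psi>)))"
  proof -
    have "\<exists>\<theta>' a b. Imp \<theta> (Neg (Uu \<phi> \<psi>)) = Imp \<theta>' (Neg (Uu a b)) \<and> E (Imp \<theta>' (Neg b)) \<and>
        (\<forall>n. E (Imp \<theta>' (Or (bigdisj (\<lambda>k. boxn M1 k (Or (Neg a) b)) n)
                              (boxn M1 (Suc n) (Neg b)))))"
      unfolding E_def dj_def by blast
    then show ?thesis unfolding justified_def by blast
  qed
  have "derives T (Imp \<theta> (Neg (Uu \<phi> \<psi>)))" unfolding der_PF
    by (rule PF_closed[OF _ cnt j]) (use d e der_PF E_def in auto)
  moreover have "derives T \<theta>" unfolding \<theta>_def by (rule der_taut) auto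
  ultimately have "derives T (Neg (Uu \<phi> \<psi>))" using der_mp by blast
  then show False using cons assms(3) unfolding consistent_def by blast
qed
end
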